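(* Let $k\ge2$ and let $A=\{a_1,\dots,a_n\}$ be a sorted multiset of positive integers ($a_1\le\dots\le a_n$) forming a $k$-PART instance. Then there exists a perfect $p$ for $A$ such that, with $Q=\sum_{i=1}^pa_i$ and $q=\max\{i:a_i\le Q\}$, the $k$-PART$_R$ instance $(A,p)$ has an optimal solution $(S_1,\dots,S_k)$ satisfying: (1) every set $S_i$ containing only elements $j\le q$ satisfies $\Sigma(S_i,A)<2Q$; (2) every element $j>q$ is contained in a singleton set of the solution.
   Context: $[n]=\{1,\dots,n\}$; elements of sets are indices. $\Sigma(S,A)=\sum_{i\in S}a_i$. For pairwise disjoint $S_1,\dots,S_k\subseteq[n]$, $\mathcal{R}(S_1,\dots,S_k,A)=\max_i\Sigma(S_i,A)/\min_i\Sigma(S_i,A)$ if the minimum is positive and $+\infty$ otherwise. $k$-PART: find pairwise disjoint $S_1,\dots,S_k\subseteq[n]$ with $\bigcup_iS_i=[n]$ minimizing $\mathcal{R}$. $k$-PART$_R$ instance $(A,p)$ for $1\le p\le n-k+1$: find pairwise disjoint $S_1,\dots,S_k\subseteq[n]$ with $\bigcup_iS_i=[n]$, $\max(S_1)=p$ and $\max(S_i)>p$ for $1<i\le k$, minimizing $\mathcal{R}$. An integer $p$ with $1\le p\le n-k+1$ is called perfect for $A$ if the optimal ratio of the $k$-PART$_R$ instance $(A,p)$ equals the optimal ratio of the $k$-PART instance $A$. *)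

theory Defs
  imports Complex_Main "HOL-Library.Extended_Real"
begin

text \<open>An instance is a function a :: nat => nat, with elements a 1, ..., a n
  (indices are elements of {1..n}). A candidate solution is S :: nat => nat set,
  whose relevant parts are S 1, ..., S k.\<close>

definition Sig :: "nat set \<Rightarrow> (nat \<Rightarrow> nat) \<Rightarrow> nat" where
  "Sig S a = (\<Sum>i\<in>S. a i)"

definition ratio :: "nat \<Rightarrow> (nat \<Rightarrow> nat set) \<Rightarrow> (nat \<Rightarrow> nat) \<Rightarrow> ereal" where
  "ratio k S a =
     (let mx = Max ((\<lambda>i. Sig (S i) a) ` {1..k});
          mn = Min ((\<lambda>i. Sig (S i) a) ` {1..k})
      in if mn > 0 then ereal (real mx / real mn) else \<infinity>)"

definition is_part :: "nat \<Rightarrow> nat \<Rightarrow> (nat \<Rightarrow> nat set) \<Rightarrow> bool" where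
  "is_part n k S \<longleftrightarrow>
     (\<forall>i\<in>{1..k}. \<forall>j\<in>{1..k}. i \<noteq> j \<longrightarrow> S i \<inter> S j = {}) \<and>
     (\<Union>i\<in>{1..k}. S i) = {1..n}"

definition is_part_R :: "nat \<Rightarrow> nat \<Rightarrow> nat \<Rightarrow> (nat \<Rightarrow> nat set) \<Rightarrow> bool" where
  "is_part_R n k p S \<longleftrightarrow>
     is_part n k S \<and> S 1 \<noteq> {} \<and> Max (S 1) = p \<and>
     (\<forall>i\<in>{2..k}. S i \<noteq> {} \<and> Max (S i) > p)"

definition opt_part :: "nat \<Rightarrow> nat \<Rightarrow> (nat \<Rightarrow> nat) \<Rightarrow> ereal" where
  "opt_part n k a = (INF S\<in>{S. is_part n k S}. ratio k S a)"

definition opt_part_R :: "nat \<Rightarrow> nat \<Rightarrow> (nat \<Rightarrow> nat) \<Rightarrow> nat \<Rightarrow> ereal" where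
  "opt_part_R n k a p = (INF S\<in>{S. is_part_R n k p S}. ratio k S a)"

definition perfect :: "nat \<Rightarrow> nat \<Rightarrow> (nat \<Rightarrow> nat) \<Rightarrow> nat \<Rightarrow> bool" where
  "perfect n k a p \<longleftrightarrow> 1 \<le> p \<and> p \<le> n - k + 1 \<and> opt_part_R n k a p = opt_part n k a"

end

theory Submission
  imports Defs
begin

lemma part_sub: "is_part n k S \<Longrightarrow> i \<in> {1..k} \<Longrightarrow> S i \<subseteq> {1..n}"
  unfolding is_part_def by blast

lemma part_fin: "is_part n k S \<Longrightarrow> i \<in> {1..k} \<Longrightarrow> finite (S i)"
  by (rule finite_subset[OF part_sub]) auto

lemma Sig_le: "A \<subseteq> {1..n} \<Longrightarrow> Sig A a \<le> Sig {1..n} a"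
  unfolding Sig_def by (rule sum_mono2) auto

lemma Sig_pos: "A \<subseteq> {1..n} \<Longrightarrow> A \<noteq> {} \<Longrightarrow> \<forall>i\<in>{1..n}. a i > 0 \<Longrightarrow> Sig A a > 0"
proof -
  assume h: "A \<subseteq> {1..n}" "A \<noteq> {}" "\<forall>i\<in>{1..n}. a i > 0"
  have f: "finite A" by (rule finite_subset[OF h(1)]) simp
  have p: "\<forall>x\<in>A. a x > 0" using h by blast
  show ?thesis unfolding Sig_def using sum_pos[OF f h(2)] p by blast
qed

lemma max_distinct:
  assumes "is_part n k S" "i \<in> {1..k}" "j \<in> {1..k}" "i \<noteq> j" "S i \<noteq> {}" "S j \<noteq> {}"
  shows "Max (S i) \<noteq> Max (S j)"
proof -
  have "Max (S i) \<in> S i" using part_fin[OF assms(1,2)] assms(5) by (rule Max_in)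
  moreover have "Max (S j) \<in> S j" using part_fin[OF assms(1,3)] assms(6) by (rule Max_in)
  moreover have "S i \<inter> S j = {}" using assms unfolding is_part_def by blast
  ultimately show ?thesis by auto
qed

lemma ratio_eq:
  "ratio k S a = (if Min ((\<lambda>i. Sig (S i) a) ` {1..k}) > 0
     then ereal (real (Max ((\<lambda>i. Sig (S i) a) ` {1..k})) / real (Min ((\<lambda>i. Sig (S i) a) ` {1..k})))
     else \<infinity>)"
  unfolding ratio_def Let_def by (rule refl)

lemma ratio_pos:
  "Min ((\<lambda>i. Sig (S i) a) ` {1..k}) > 0 \<Longrightarrow>
   ratio k S a = ereal (real (Max ((\<lambda>i. Sig (S i) a) ` {1..k})) / real (Min ((\<lambda>i. Sig (S i) a) ` {1..k})))"
  unfolding ratio_eq by (rule if_P)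

lemma ratio_npos:
  "\<not> Min ((\<lambda>i. Sig (S i) a) ` {1..k}) > 0 \<Longrightarrow> ratio k S a = \<infinity>"
  unfolding ratio_eq by (rule if_not_P)

lemma ratio_fin:
  assumes "ratio k S a \<noteq> \<infinity>" "i \<in> {1..k}"
  shows "Sig (S i) a > 0"
proof -
  have "Min ((\<lambda>i. Sig (S i) a) ` {1..k}) > 0"
    using assms(1) ratio_npos by blast
  moreover have "Min ((\<lambda>i. Sig (S i) a) ` {1..k}) \<le> Sig (S i) a"
    using assms(2) by (intro Min_le) auto
  ultimately show ?thesis by linarith
qed

lemma ratio_pos_fin:
  assumes "\<forall>i\<in>{1..k}. Sig (S i) a > 0" "k \<ge> 1"
  shows "ratio k S a \<noteq> \<infinity>"
proof -
  have "Min ((\<lambda>i. Sig (S i) a) ` {1..k}) > 0"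
    using assms by (subst Min_gr_iff) auto
  then show ?thesis using ratio_pos by simp
qed

lemma ratio_le:
  assumes k: "k \<ge> 1"
    and pos: "Min ((\<lambda>i. Sig (S i) a) ` {1..k}) > 0"
    and b: "\<forall>i\<in>{1..k}. Min ((\<lambda>i. Sig (S i) a) ` {1..k}) \<le> Sig (S' i) a \<and>
                        Sig (S' i) a \<le> Max ((\<lambda>i. Sig (S i) a) ` {1..k})"
  shows "ratio k S' a \<le> ratio k S a"
proof -
  define mn where "mn = Min ((\<lambda>i. Sig (S i) a) ` {1..k})"
  define mx where "mx = Max ((\<lambda>i. Sig (S i) a) ` {1..k})"
  define mn' where "mn' = Min ((\<lambda>i. Sig (S' i) a) ` {1..k})"
  define mx' where "mx' = Max ((\<lambda>i. Sig (S' i) a) ` {1..k})"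
  have ne: "(\<lambda>i. Sig (S' i) a) ` {1..k} \<noteq> {}" using k by auto
  have fin: "finite ((\<lambda>i. Sig (S' i) a) ` {1..k})" by simp
  have "mn' \<in> (\<lambda>i. Sig (S' i) a) ` {1..k}" unfolding mn'_def using fin ne by (rule Min_in)
  then obtain i1 where i1: "i1 \<in> {1..k}" "mn' = Sig (S' i1) a" by blast
  have "mx' \<in> (\<lambda>i. Sig (S' i) a) ` {1..k}" unfolding mx'_def using fin ne by (rule Max_in)
  then obtain i2 where i2: "i2 \<in> {1..k}" "mx' = Sig (S' i2) a" by blast
  have mnle: "mn \<le> mn'" using b i1 unfolding mn_def by blast
  have mxle: "mx' \<le> mx" using b i2 unfolding mx_def by blast
  have mnpos: "mn > 0" using pos unfolding mn_def .
  have mnpos': "mn' > 0" using mnle mnpos by linarith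
  have "real mx' / real mn' \<le> real mx / real mn"
  proof (rule frac_le)
    show "0 \<le> real mx" by simp
    show "real mx' \<le> real mx" using mxle by simp
    show "0 < real mn" using mnpos by simp
    show "real mn \<le> real mn'" using mnle by simp
  qed
  moreover have "ratio k S a = ereal (real mx / real mn)"
    unfolding mx_def mn_def using pos by (rule ratio_pos)
  moreover have "ratio k S' a = ereal (real mx' / real mn')"
    unfolding mx'_def mn'_def using mnpos' unfolding mn'_def by (rule ratio_pos)
  ultimately show ?thesis by (simp only: ereal_less_eq(3))
qed

lemma ratio_range:
  assumes "is_part n k S" "k \<ge> 1"
  shows "ratio k S a \<in> insert \<infinity> ((\<lambda>(x,y). ereal (real x / real y)) ` ({..Sig {1..n} a} \<times> {..Sig {1..n} a}))"
proof -
  let ?I = "(\<lambda>i. Sig (S i) a) ` {1..k}"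
  have ne: "?I \<noteq> {}" using assms by auto
  have "Max ?I \<in> ?I" "Min ?I \<in> ?I" using ne by (auto intro: Max_in Min_in)
  moreover have "\<forall>x\<in>?I. x \<le> Sig {1..n} a"
  proof
    fix x assume "x \<in> ?I"
    then obtain i where i: "i \<in> {1..k}" "x = Sig (S i) a" by blast
    show "x \<le> Sig {1..n} a" using Sig_le[OF part_sub[OF assms(1) i(1)]] i(2) by simp
  qed
  ultimately have "Max ?I \<le> Sig {1..n} a" "Min ?I \<le> Sig {1..n} a" by auto
  show ?thesis
  proof (cases "Min ?I > 0")
    case True
    then have e: "ratio k S a = ereal (real (Max ?I) / real (Min ?I))"
      by (rule ratio_pos)
    have "(Max ?I, Min ?I) \<in> {..Sig {1..n} a} \<times> {..Sig {1..n} a}"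
      using \<open>Max ?I \<le> Sig {1..n} a\<close> \<open>Min ?I \<le> Sig {1..n} a\<close> by simp
    then have "ereal (real (Max ?I) / real (Min ?I)) \<in> (\<lambda>(x,y). ereal (real x / real y)) ` ({..Sig {1..n} a} \<times> {..Sig {1..n} a})"
      by (rule rev_image_eqI) simp
    then show ?thesis unfolding e by (rule insertI2)
  next
    case False
    then have "ratio k S a = \<infinity>" by (rule ratio_npos)
    then show ?thesis by (simp only: insertI1)
  qed
qed

lemma relabel:
  fixes S :: "nat \<Rightarrow> nat set"
  assumes part: "is_part n k S" and ne: "\<forall>i\<in>{1..k}. S i \<noteq> {}" and i0: "i0 \<in> {1..k}"
    and mn: "\<forall>i\<in>{1..k}. Max (S i0) \<le> Max (S i)"
  shows "\<exists>S'. is_part_R n k (Max (S i0)) S' \<and> ratio k S' a = ratio k S a \<and> S' 1 = S i0"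
proof -
  define \<sigma> where "\<sigma> = (\<lambda>i::nat. if i = 1 then i0 else if i = i0 then 1 else i)"
  define S' where "S' = (\<lambda>i. S (\<sigma> i))"
  have k1: "1 \<le> k" using i0 by auto
  have sig_in: "\<forall>i\<in>{1..k}. \<sigma> i \<in> {1..k}" using i0 k1 by (auto simp: \<sigma>_def)
  have sig_inv: "\<And>i. \<sigma> (\<sigma> i) = i" by (auto simp: \<sigma>_def)
  have img: "\<sigma> ` {1..k} = {1..k}"
  proof
    show "\<sigma> ` {1..k} \<subseteq> {1..k}" using sig_in by auto
    show "{1..k} \<subseteq> \<sigma> ` {1..k}"
    proof
      fix x assume "x \<in> {1..k}"
      then have "\<sigma> x \<in> {1..k}" using sig_in by auto
      then show "x \<in> \<sigma> ` {1..k}" by (rule image_eqI[where x="\<sigma> x", rotated]) (simp add: sig_inv)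
    qed
  qed
  have img2: "(\<lambda>i. Sig (S' i) a) ` {1..k} = (\<lambda>i. Sig (S i) a) ` {1..k}"
  proof -
    have "(\<lambda>i. Sig (S i) a) ` (\<sigma> ` {1..k}) = (\<lambda>i. Sig (S (\<sigma> i)) a) ` {1..k}" by (simp only: image_image)
    then show ?thesis unfolding S'_def img by simp
  qed
  have rat: "ratio k S' a = ratio k S a"
    unfolding ratio_def img2 ..
  have un: "(\<Union>i\<in>{1..k}. S' i) = (\<Union>i\<in>{1..k}. S i)"
  proof -
    have "S ` (\<sigma> ` {1..k}) = (\<lambda>i. S (\<sigma> i)) ` {1..k}" by (simp only: image_image)
    then show ?thesis unfolding S'_def img by simp
  qed
  have disj: "\<forall>i\<in>{1..k}. \<forall>j\<in>{1..k}. i \<noteq> j \<longrightarrow> S' i \<inter> S' j = {}"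
  proof (intro ballI impI)
    fix i j assume "i \<in> {1..k}" "j \<in> {1..k}" "i \<noteq> j"
    then have "\<sigma> i \<noteq> \<sigma> j" "\<sigma> i \<in> {1..k}" "\<sigma> j \<in> {1..k}"
      using sig_in sig_inv[of i] sig_inv[of j] by auto
    then show "S' i \<inter> S' j = {}" using part unfolding is_part_def S'_def by blast
  qed
  have partS': "is_part n k S'" using part un disj unfolding is_part_def by simp
  have S'1: "S' 1 = S i0" by (simp add: S'_def \<sigma>_def)
  have rest: "\<forall>i\<in>{2..k}. S' i \<noteq> {} \<and> Max (S' i) > Max (S i0)"
  proof
    fix i assume i: "i \<in> {2..k}"
    then have si: "\<sigma> i \<in> {1..k}" "\<sigma> i \<noteq> i0" using sig_in sig_inv[of i] by (auto simp: \<sigma>_def split: if_splits)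
    then have "S (\<sigma> i) \<noteq> {}" "Max (S i0) \<le> Max (S (\<sigma> i))" using ne mn by auto
    moreover have "Max (S (\<sigma> i)) \<noteq> Max (S i0)"
      using max_distinct[OF part si(1) i0 si(2)] ne si i0 by auto
    ultimately show "S' i \<noteq> {} \<and> Max (S' i) > Max (S i0)" unfolding S'_def by auto
  qed
  have "is_part_R n k (Max (S i0)) S'"
    unfolding is_part_R_def using partS' S'1 rest ne i0 by auto
  then show ?thesis using rat S'1 by blast
qed

lemma move_part:
  assumes part: "is_part n k S" and t: "t \<in> {1..k}" "t \<noteq> 1" and X: "X \<subseteq> S t"
  shows "is_part n k (S(1 := S 1 \<union> X, t := S t - X))"
proof -
  have k1: "1 \<in> {1..k}" using t by auto
  let ?S = "S(1 := S 1 \<union> X, t := S t - X)"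
  have un: "(\<Union>i\<in>{1..k}. ?S i) = (\<Union>i\<in>{1..k}. S i)"
  proof -
    have A: "{1..k} = insert 1 (insert t ({1..k} - {1,t}))" using k1 t by auto
    have B: "(\<Union>i\<in>{1..k} - {1,t}. ?S i) = (\<Union>i\<in>{1..k} - {1,t}. S i)" by auto
    show ?thesis apply (subst (1 2) A) using B X t by auto
  qed
  have d: "\<forall>i\<in>{1..k}. \<forall>j\<in>{1..k}. i \<noteq> j \<longrightarrow> S i \<inter> S j = {}"
    using part unfolding is_part_def by blast
  have disj: "\<forall>i\<in>{1..k}. \<forall>j\<in>{1..k}. i \<noteq> j \<longrightarrow> ?S i \<inter> ?S j = {}"
  proof (intro ballI impI)
    fix i j assume ij: "i \<in> {1..k}" "j \<in> {1..k}" "i \<noteq> j"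
    have d1: "S 1 \<inter> S t = {}" using d k1 t by auto
    have dt: "\<And>m. m \<in> {1..k} \<Longrightarrow> m \<noteq> t \<Longrightarrow> S m \<inter> S t = {}" using d t by blast
    have dd: "S i \<inter> S j = {}" using d ij by blast
    show "?S i \<inter> ?S j = {}"
      using ij dd d1 dt[of i] dt[of j] X t by (auto; blast)
  qed
  show ?thesis using un disj part unfolding is_part_def by simp
qed

lemma improve:
  assumes part: "is_part n k S'" and ne: "\<forall>i\<in>{1..k}. S' i \<noteq> {}" and k1: "k \<ge> 1"
    and c: "\<forall>i\<in>{2..k}. Max (S' i) > p"
  shows "\<exists>S''. is_part_R n k (Max (S'' 1)) S'' \<and> ratio k S'' a = ratio k S' a \<and>
           (Max (S'' 1) > p \<or> S'' 1 = S' 1)"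
proof -
  let ?M = "(\<lambda>i. Max (S' i)) ` {1..k}"
  have "Min ?M \<in> ?M" using k1 by (intro Min_in) auto
  then obtain i0 where i0: "i0 \<in> {1..k}" "Max (S' i0) = Min ?M" by auto
  have mn: "\<forall>i\<in>{1..k}. Max (S' i0) \<le> Max (S' i)" using i0 by auto
  obtain S'' where S'': "is_part_R n k (Max (S' i0)) S''" "ratio k S'' a = ratio k S' a" "S'' 1 = S' i0"
    using relabel[OF part ne i0(1) mn] by blast
  have e: "Max (S'' 1) = Max (S' i0)" using S''(3) by simp
  have R: "is_part_R n k (Max (S'' 1)) S''" using S''(1) unfolding e .
  have "Max (S'' 1) > p \<or> S'' 1 = S' 1"
  proof (cases "i0 = 1")
    case True
    then show ?thesis using S''(3) by simp
  next
    case False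
    then have "i0 \<in> {2..k}" using i0 by auto
    then have "Max (S' i0) > p" using c by blast
    then show ?thesis using e by simp
  qed
  then show ?thesis using R S''(2) by blast
qed

lemma arith1:
  fixes n M p s s' T :: nat
  assumes "p < M" "M \<le> n" "s' \<le> T"
  shows "(n - M) * (T + 1) + (T - s') < (n - p) * (T + 1) + (T - s)"
proof -
  have "(n - M + 1) * (T + 1) \<le> (n - p) * (T + 1)" by (rule mult_le_mono1) (use assms in simp)
  moreover have "(n - M + 1) * (T + 1) = (n - M) * (T + 1) + (T + 1)" by (simp only: add_mult_distrib) simp
  moreover have "T - s' \<le> T" by simp
  ultimately show ?thesis by linarith
qed

lemma arith2:
  fixes n M p s s' T :: nat
  assumes "p \<le> M" "s < s'" "s' \<le> T"
  shows "(n - M) * (T + 1) + (T - s') < (n - p) * (T + 1) + (T - s)"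
proof -
  have "(n - M) * (T + 1) \<le> (n - p) * (T + 1)" by (rule mult_le_mono1) (use assms in simp)
  moreover have "T - s' < T - s" using assms by simp
  ultimately show ?thesis by linarith
qed

theorem theorem18:
  fixes n k :: nat and a :: "nat \<Rightarrow> nat"
  assumes "k \<ge> 2" and "n \<ge> k"
    and "\<forall>i\<in>{1..n}. a i > 0"
    and "\<forall>i\<in>{1..n}. \<forall>j\<in>{1..n}. i \<le> j \<longrightarrow> a i \<le> a j"
  shows "\<exists>p. perfect n k a p \<and>
           (let Q = (\<Sum>i=1..p. a i); q = Max {i\<in>{1..n}. a i \<le> Q} in
            \<exists>S. is_part_R n k p S \<and> ratio k S a = opt_part_R n k a p \<and>
                (\<forall>i\<in>{1..k}. S i \<subseteq> {..q} \<longrightarrow> Sig (S i) a < 2 * Q) \<and>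
                (\<forall>j\<in>{q<..n}. \<exists>i\<in>{1..k}. S i = {j}))"
proof -
  have k1: "k \<ge> 1" using assms(1) by simp
  have apos: "\<forall>i\<in>{1..n}. a i > 0" using assms(3) by blast
  have amono: "\<forall>i\<in>{1..n}. \<forall>j\<in>{1..n}. i \<le> j \<longrightarrow> a i \<le> a j" using assms(4) by blast
  define T where "T = Sig {1..n} a"
  define OPT where "OPT = opt_part n k a"
  define W0 where "W0 = (\<lambda>i::nat. if i < k then {i} else {k..n})"
  have W0part: "is_part n k W0"
  proof -
    have d: "\<forall>i\<in>{1..k}. \<forall>j\<in>{1..k}. i \<noteq> j \<longrightarrow> W0 i \<inter> W0 j = {}"
    proof (intro ballI impI)
      fix i j assume i: "i \<in> {1..k}" and j: "j \<in> {1..k}" and ij: "i \<noteq> j"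
      show "W0 i \<inter> W0 j = {}"
      proof (cases "i < k")
        case True
        show ?thesis
        proof (cases "j < k")
          case True
          then show ?thesis using \<open>i < k\<close> ij unfolding W0_def by simp
        next
          case False
          then show ?thesis using \<open>i < k\<close> unfolding W0_def by simp
        qed
      next
        case False
        then have "i = k" using i by simp
        then have "j < k" using j ij by simp
        then show ?thesis using False unfolding W0_def by simp
      qed
    qed
    have u: "(\<Union>i\<in>{1..k}. W0 i) = {1..n}"
    proof
      show "(\<Union>i\<in>{1..k}. W0 i) \<subseteq> {1..n}"
      proof (rule UN_least)
        fix i assume i: "i \<in> {1..k}"
        show "W0 i \<subseteq> {1..n}"
        proof (cases "i < k")
          case True then show ?thesis using i assms(2) unfolding W0_def by simp
        next
          case False then show ?thesis using k1 unfolding W0_def by auto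
        qed
      qed
      show "{1..n} \<subseteq> (\<Union>i\<in>{1..k}. W0 i)"
      proof
        fix x assume x: "x \<in> {1..n}"
        show "x \<in> (\<Union>i\<in>{1..k}. W0 i)"
        proof (cases "x < k")
          case True
          then have "x \<in> W0 x" "x \<in> {1..k}" using x unfolding W0_def by auto
          then show ?thesis by blast
        next
          case False
          then have "x \<in> W0 k" "k \<in> {1..k}" using x k1 unfolding W0_def by auto
          then show ?thesis by blast
        qed
      qed
    qed
    show ?thesis unfolding is_part_def using d u by blast
  qed
  have W0fin: "ratio k W0 a \<noteq> \<infinity>"
  proof (rule ratio_pos_fin[OF _ k1], intro ballI)
    fix i assume i: "i \<in> {1..k}"
    have "W0 i \<noteq> {}" unfolding W0_def using assms(2) by auto
    then show "Sig (W0 i) a > 0" using Sig_pos[OF part_sub[OF W0part i] _ apos] by blast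
  qed
  define R where "R = (\<lambda>S. ratio k S a) ` {S. is_part n k S}"
  have finR: "finite R"
  proof (rule finite_subset)
    show "R \<subseteq> insert \<infinity> ((\<lambda>(x,y). ereal (real x / real y)) ` ({..Sig {1..n} a} \<times> {..Sig {1..n} a}))"
    proof
      fix r assume "r \<in> R"
      then obtain S where "is_part n k S" "r = ratio k S a" unfolding R_def by blast
      then show "r \<in> insert \<infinity> ((\<lambda>(x,y). ereal (real x / real y)) ` ({..Sig {1..n} a} \<times> {..Sig {1..n} a}))"
        using ratio_range[OF _ k1, of n S a] by simp
    qed
  qed simp
  have neR: "R \<noteq> {}" using W0part unfolding R_def by auto
  have OPTR: "OPT = Inf R" unfolding OPT_def opt_part_def R_def by simp
  have "OPT = Min R" unfolding OPTR using finR neR by (rule cInf_eq_Min)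
  then have "OPT \<in> R" using Min_in[OF finR neR] by simp
  then obtain S0 where S0: "is_part n k S0" "ratio k S0 a = OPT" unfolding R_def by auto
  have lower: "\<And>S. is_part n k S \<Longrightarrow> OPT \<le> ratio k S a"
    unfolding OPT_def opt_part_def by (rule INF_lower) simp
  have OPTfin: "OPT \<noteq> \<infinity>" using lower[OF W0part] W0fin by auto
  have S0ne: "\<forall>i\<in>{1..k}. S0 i \<noteq> {}"
  proof
    fix i assume i: "i \<in> {1..k}"
    have "ratio k S0 a \<noteq> \<infinity>" using S0(2) OPTfin by simp
    then have "Sig (S0 i) a > 0" using ratio_fin i by blast
    then show "S0 i \<noteq> {}" unfolding Sig_def by auto
  qed
  define G where "G = {S. is_part_R n k (Max (S 1)) S \<and> ratio k S a = OPT}"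
  define f where "f = (\<lambda>S::nat \<Rightarrow> nat set. (n - Max (S 1)) * (T+1) + (T - Sig (S 1) a))"
  have "\<forall>i\<in>{2..k}. Max (S0 i) > 0"
  proof
    fix i assume i: "i \<in> {2..k}"
    then have "Max (S0 i) \<in> S0 i" using S0ne part_fin[OF S0(1)] by (intro Max_in) auto
    then show "Max (S0 i) > 0" using part_sub[OF S0(1), of i] i by auto
  qed
  then obtain S1 where "is_part_R n k (Max (S1 1)) S1" "ratio k S1 a = ratio k S0 a"
    using improve[OF S0(1) S0ne k1, of 0 a] by blast
  then have "S1 \<in> G" unfolding G_def using S0 by auto
  then obtain S where SG: "S \<in> G" and Smin: "\<And>S'. S' \<in> G \<Longrightarrow> f S \<le> f S'"
    using ex_has_least_nat[of "\<lambda>S. S \<in> G" S1 f] by blast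
  define p where "p = Max (S 1)"
  have RS: "is_part_R n k p S" and ratS: "ratio k S a = OPT" using SG unfolding G_def p_def by auto
  have partS: "is_part n k S" and S1ne: "S 1 \<noteq> {}" and gt: "\<forall>i\<in>{2..k}. S i \<noteq> {} \<and> Max (S i) > p"
    using RS unfolding is_part_R_def by auto
  have one: "1 \<in> {1..k}" using k1 by simp
  have neS: "\<forall>i\<in>{1..k}. S i \<noteq> {}"
  proof
    fix i assume "i \<in> {1..k}"
    then show "S i \<noteq> {}" using S1ne gt by (cases "i = 1") auto
  qed
  have subS: "\<And>i. i \<in> {1..k} \<Longrightarrow> S i \<subseteq> {1..n}" using part_sub[OF partS] by blast
  have finS: "\<And>i. i \<in> {1..k} \<Longrightarrow> finite (S i)" using part_fin[OF partS] by blast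
  have pin: "p \<in> S 1" unfolding p_def using S1ne finS[OF one] by (rule Max_in[rotated])
  have p1n: "1 \<le> p" "p \<le> n" using pin subS[OF one] by auto
  have S1p: "S 1 \<subseteq> {1..p}" using subS[OF one] finS[OF one] unfolding p_def by auto
  have optR: "opt_part_R n k a p = OPT"
  proof (rule antisym)
    show "opt_part_R n k a p \<le> OPT" unfolding opt_part_R_def by (rule INF_lower2[of S]) (use RS ratS in simp_all)
    show "OPT \<le> opt_part_R n k a p" unfolding opt_part_R_def
      by (rule INF_greatest) (use lower in \<open>auto simp: is_part_R_def\<close>)
  qed
  have pbound: "p \<le> n - k + 1"
  proof -
    have inj: "inj_on (\<lambda>i. Max (S i)) {2..k}"
    proof (rule inj_onI, rule ccontr)
      fix i j assume "i \<in> {2..k}" "j \<in> {2..k}" "Max (S i) = Max (S j)" "i \<noteq> j"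
      then show False using max_distinct[OF partS, of i j] neS by auto
    qed
    have sub: "(\<lambda>i. Max (S i)) ` {2..k} \<subseteq> {p<..n}"
    proof
      fix x assume "x \<in> (\<lambda>i. Max (S i)) ` {2..k}"
      then obtain i where i: "i \<in> {2..k}" "x = Max (S i)" by auto
      then have "Max (S i) \<in> S i" using neS finS by (intro Max_in) auto
      then show "x \<in> {p<..n}" using i gt subS[of i] by auto
    qed
    have "card {2..k} \<le> card {p<..n}" by (rule card_inj_on_le[OF inj sub]) simp
    then show ?thesis using p1n assms(1,2) by simp
  qed
  have perf: "perfect n k a p" unfolding perfect_def using p1n pbound optR OPT_def by simp
  define Q where "Q = (\<Sum>i=1..p. a i)"
  define q where "q = Max {i\<in>{1..n}. a i \<le> Q}"
  have SigQ: "Sig (S 1) a \<le> Q" unfolding Sig_def Q_def using S1p by (intro sum_mono2) auto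
  have apQ: "a p \<le> Q" unfolding Q_def using p1n by (intro member_le_sum) auto
  have Qpos: "Q > 0" using apQ apos p1n by (meson atLeastAtMost_iff less_le_trans)
  have finQ: "finite {i\<in>{1..n}. a i \<le> Q}" by simp
  have pq: "p \<in> {i\<in>{1..n}. a i \<le> Q}" using apQ p1n by auto
  have qin: "q \<in> {i\<in>{1..n}. a i \<le> Q}" unfolding q_def using finQ pq by (intro Max_in) auto
  have p_le_q: "p \<le> q" unfolding q_def using finQ pq by (intro Max_ge)
  have small: "\<And>x. x \<in> {1..n} \<Longrightarrow> x \<le> q \<Longrightarrow> a x \<le> Q"
  proof -
    fix x assume x: "x \<in> {1..n}" "x \<le> q"
    have qn: "q \<in> {1..n}" "a q \<le> Q" using qin by auto
    then have "a x \<le> a q" using amono x by blast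
    then show "a x \<le> Q" using qn by simp
  qed
  have big: "\<And>x. x \<in> {1..n} \<Longrightarrow> q < x \<Longrightarrow> Q < a x"
  proof (rule ccontr)
    fix x assume "x \<in> {1..n}" "q < x" "\<not> Q < a x"
    then have "x \<in> {i\<in>{1..n}. a i \<le> Q}" by auto
    then have "x \<le> q" unfolding q_def using finQ by (intro Max_ge)
    then show False using \<open>q < x\<close> by simp
  qed
  define mnS where "mnS = Min ((\<lambda>i. Sig (S i) a) ` {1..k})"
  define mxS where "mxS = Max ((\<lambda>i. Sig (S i) a) ` {1..k})"
  have mnpos: "mnS > 0"
  proof (rule ccontr)
    assume "\<not> mnS > 0"
    then have "ratio k S a = \<infinity>" unfolding mnS_def by (rule ratio_npos)
    then show False using ratS OPTfin by simp
  qed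
  have mnle: "\<And>i. i \<in> {1..k} \<Longrightarrow> mnS \<le> Sig (S i) a" unfolding mnS_def by (intro Min_le) auto
  have mxge: "\<And>i. i \<in> {1..k} \<Longrightarrow> Sig (S i) a \<le> mxS" unfolding mxS_def by (intro Max_ge) auto
  have noimp: False
    if P: "is_part n k S'" and Pne: "\<forall>i\<in>{1..k}. S' i \<noteq> {}" and Psub: "S 1 \<subseteq> S' 1"
      and Plt: "Sig (S 1) a < Sig (S' 1) a" and Pgt: "\<forall>i\<in>{2..k}. Max (S' i) > p"
      and Pb: "\<forall>i\<in>{1..k}. mnS \<le> Sig (S' i) a \<and> Sig (S' i) a \<le> mxS" for S'
  proof -
    have "ratio k S' a \<le> ratio k S a"
      by (rule ratio_le[OF k1]) (use mnpos Pb in \<open>auto simp: mnS_def mxS_def\<close>)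
    then have ratS': "ratio k S' a = OPT" using lower[OF P] ratS by simp
    obtain S'' where S'': "is_part_R n k (Max (S'' 1)) S''" "ratio k S'' a = ratio k S' a"
      "Max (S'' 1) > p \<or> S'' 1 = S' 1"
      using improve[OF P Pne k1 Pgt] by blast
    have "S'' \<in> G" unfolding G_def using S'' ratS' by simp
    then have fle: "f S \<le> f S''" by (rule Smin)
    have partS'': "is_part n k S''" and ne'': "S'' 1 \<noteq> {}" using S''(1) unfolding is_part_R_def by auto
    have sub'': "S'' 1 \<subseteq> {1..n}" using part_sub[OF partS'' one] .
    have fin'': "finite (S'' 1)" using part_fin[OF partS'' one] .
    have Mn: "Max (S'' 1) \<le> n" using Max_in[OF fin'' ne''] sub'' by auto
    have sT: "Sig (S'' 1) a \<le> T" unfolding T_def by (rule Sig_le[OF sub''])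
    have "f S'' < f S"
    proof (cases "Max (S'' 1) > p")
      case True
      show ?thesis unfolding f_def p_def[symmetric] by (rule arith1[OF True Mn sT])
    next
      case False
      then have eq: "S'' 1 = S' 1" using S''(3) by simp
      have fin': "finite (S' 1)" using part_fin[OF P one] .
      have "p \<le> Max (S' 1)" using Psub pin fin' by (intro Max_ge) auto
      then show ?thesis unfolding f_def p_def[symmetric] eq
        by (intro arith2) (use Plt sT eq in auto)
    qed
    then show False using fle by simp
  qed
  have part2: "\<forall>j\<in>{q<..n}. \<exists>i\<in>{1..k}. S i = {j}"
  proof (rule ballI, rule ccontr)
    fix j assume j: "j \<in> {q<..n}" and nos: "\<not> (\<exists>i\<in>{1..k}. S i = {j})"
    have jn: "j \<in> {1..n}" using j p1n p_le_q by auto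
    then obtain t where t: "t \<in> {1..k}" "j \<in> S t" using partS unfolding is_part_def by blast
    have t1: "t \<noteq> 1"
    proof
      assume "t = 1"
      then have "j \<le> p" using S1p t by auto
      then show False using j p_le_q by auto
    qed
    define X where "X = S t - {j}"
    have Xne: "X \<noteq> {}" using nos t unfolding X_def by blast
    have Xsub: "X \<subseteq> S t" unfolding X_def by auto
    have Xn: "X \<subseteq> {1..n}" using Xsub subS[OF t(1)] by auto
    have finX: "finite X" by (rule finite_subset[OF Xsub finS[OF t(1)]])
    define S' where "S' = S(1 := S 1 \<union> X, t := S t - X)"
    have P: "is_part n k S'" unfolding S'_def by (rule move_part[OF partS t(1) t1 Xsub])
    have S'1: "S' 1 = S 1 \<union> X" and S't: "S' t = {j}" and S'o: "\<And>i. i \<noteq> 1 \<Longrightarrow> i \<noteq> t \<Longrightarrow> S' i = S i"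
      unfolding S'_def X_def using t1 t by auto
    have d1t: "S 1 \<inter> S t = {}" using partS t t1 one unfolding is_part_def by blast
    have sig1: "Sig (S' 1) a = Sig (S 1) a + Sig X a"
      unfolding S'1 Sig_def using d1t Xsub finX finS[OF one] by (intro sum.union_disjoint) auto
    have sigt: "Sig (S t) a = a j + Sig X a"
      unfolding Sig_def X_def using t finS[OF t(1)] by (simp add: sum.remove)
    have sigX: "Sig X a > 0" using Sig_pos[OF Xn Xne apos] .
    have ajQ: "Q < a j" using big jn j by auto
    have b: "\<forall>i\<in>{1..k}. mnS \<le> Sig (S' i) a \<and> Sig (S' i) a \<le> mxS"
    proof
      fix i assume i: "i \<in> {1..k}"
      show "mnS \<le> Sig (S' i) a \<and> Sig (S' i) a \<le> mxS"
      proof (cases "i = 1")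
        case True
        then show ?thesis using sig1 sigt mnle[OF one] mxge[OF t(1)] SigQ ajQ by simp
      next
        case False
        show ?thesis
        proof (cases "i = t")
          case True
          then show ?thesis using S't sigt mnle[OF one] mxge[OF t(1)] SigQ ajQ by (simp add: Sig_def)
        next
          case False
          then show ?thesis using S'o[OF \<open>i \<noteq> 1\<close> False] mnle[OF i] mxge[OF i] by simp
        qed
      qed
    qed
    have ne': "\<forall>i\<in>{1..k}. S' i \<noteq> {}"
    proof
      fix i assume i: "i \<in> {1..k}"
      show "S' i \<noteq> {}"
      proof (cases "i = 1")
        case True then show ?thesis using S'1 S1ne by simp
      next
        case False
        show ?thesis
        proof (cases "i = t")
          case True then show ?thesis using S't by simp
        next
          case f2: False
          then show ?thesis using S'o[OF False f2] neS i by simp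
        qed
      qed
    qed
    have gt': "\<forall>i\<in>{2..k}. Max (S' i) > p"
    proof
      fix i assume i: "i \<in> {2..k}"
      show "Max (S' i) > p"
      proof (cases "i = t")
        case True
        then show ?thesis using S't j p_le_q by auto
      next
        case False
        then show ?thesis using S'o[OF _ False] i gt by auto
      qed
    qed
    show False
      by (rule noimp[OF P ne']) (use S'1 sig1 sigX b gt' in auto)
  qed
  have part1: "\<forall>i\<in>{1..k}. S i \<subseteq> {..q} \<longrightarrow> Sig (S i) a < 2 * Q"
  proof (intro ballI impI, rule ccontr)
    fix i assume i: "i \<in> {1..k}" and iq: "S i \<subseteq> {..q}" and ge: "\<not> Sig (S i) a < 2 * Q"
    have i1: "i \<noteq> 1" using ge SigQ Qpos by auto
    define W where "W = S i"
    have Wfin: "finite W" and Wne: "W \<noteq> {}" using finS[OF i] neS i unfolding W_def by auto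
    define x where "x = Min W"
    have xW: "x \<in> W" unfolding x_def using Wfin Wne by (rule Min_in)
    have Wn: "W \<subseteq> {1..n}" using subS[OF i] W_def by simp
    have "x \<in> {1..n}" "x \<le> q" using xW Wn iq W_def by auto
    then have axQ: "a x \<le> Q" by (rule small)
    have axpos: "a x > 0" using xW Wn apos by auto
    have sigW: "Sig W a = a x + Sig (W - {x}) a"
      unfolding Sig_def using xW Wfin by (simp add: sum.remove)
    have Wx: "W - {x} \<noteq> {}"
    proof
      assume e: "W - {x} = {}"
      have "Sig (W - {x}) a = 0" unfolding e Sig_def by simp
      then have "Sig W a = a x" using sigW by simp
      then show False using ge axQ Qpos W_def by simp
    qed
    have Wxn: "W - {x} \<subseteq> {1..n}" using Wn by auto
    have maxWx: "Max (S i) \<le> Max (W - {x})"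
    proof -
      obtain y where y: "y \<in> W" "y \<noteq> x" using Wx by auto
      have "x \<le> y" unfolding x_def using Wfin y by simp
      moreover have "y \<le> Max W" using Wfin y by simp
      ultimately have "Max W \<noteq> x" using y by simp
      then have "Max W \<in> W - {x}" using Max_in[OF Wfin Wne] by simp
      then show ?thesis unfolding W_def[symmetric] using Wfin by (intro Max_ge) auto
    qed
    have it: "i \<in> {2..k}" using i i1 by auto
    define S' where "S' = S(1 := S 1 \<union> {x}, i := S i - {x})"
    have P: "is_part n k S'" unfolding S'_def by (rule move_part[OF partS i i1]) (use xW W_def in simp)
    have S'1: "S' 1 = S 1 \<union> {x}" and S'i: "S' i = W - {x}" and S'o: "\<And>m. m \<noteq> 1 \<Longrightarrow> m \<noteq> i \<Longrightarrow> S' m = S m"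
      unfolding S'_def W_def using i1 by auto
    have d1t: "S 1 \<inter> S i = {}" using partS i i1 one unfolding is_part_def by blast
    have xS1: "x \<notin> S 1" using d1t xW W_def by auto
    have sig1: "Sig (S' 1) a = Sig (S 1) a + a x"
      unfolding S'1 Sig_def using xS1 finS[OF one] by simp
    have b: "\<forall>m\<in>{1..k}. mnS \<le> Sig (S' m) a \<and> Sig (S' m) a \<le> mxS"
    proof
      fix m assume m: "m \<in> {1..k}"
      show "mnS \<le> Sig (S' m) a \<and> Sig (S' m) a \<le> mxS"
      proof (cases "m = 1")
        case True
        then show ?thesis using sig1 mnle[OF one] mxge[OF i] SigQ axQ ge W_def by simp
      next
        case False
        show ?thesis
        proof (cases "m = i")
          case True
          then show ?thesis using S'i sigW mnle[OF one] mxge[OF i] SigQ axQ ge W_def by simp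
        next
          case False
          then show ?thesis using S'o[OF \<open>m \<noteq> 1\<close> False] mnle[OF m] mxge[OF m] by simp
        qed
      qed
    qed
    have ne': "\<forall>m\<in>{1..k}. S' m \<noteq> {}"
    proof
      fix m assume m: "m \<in> {1..k}"
      show "S' m \<noteq> {}"
      proof (cases "m = 1")
        case True then show ?thesis using S'1 by simp
      next
        case False
        show ?thesis
        proof (cases "m = i")
          case True then show ?thesis using S'i Wx by simp
        next
          case f2: False
          then show ?thesis using S'o[OF False f2] neS m by simp
        qed
      qed
    qed
    have gt': "\<forall>m\<in>{2..k}. Max (S' m) > p"
    proof
      fix m assume m: "m \<in> {2..k}"
      show "Max (S' m) > p"
      proof (cases "m = i")
        case True
        have "Max (S i) > p" using gt it by blast
        then show ?thesis using True S'i maxWx by simp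
      next
        case False
        then show ?thesis using S'o[OF _ False] m gt by auto
      qed
    qed
    show False
      by (rule noimp[OF P ne']) (use S'1 sig1 axpos b gt' in auto)
  qed
  have "\<exists>S. is_part_R n k p S \<and> ratio k S a = opt_part_R n k a p \<and>
                (\<forall>i\<in>{1..k}. S i \<subseteq> {..q} \<longrightarrow> Sig (S i) a < 2 * Q) \<and>
                (\<forall>j\<in>{q<..n}. \<exists>i\<in>{1..k}. S i = {j})"
    using RS ratS optR part1 part2 by auto
  then show ?thesis using perf unfolding Let_def Q_def q_def by blast
qed

end
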